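(* Let $G$ be a (possibly infinite) cyclic graph with vertex set $V$. For every $v\in V$, \[ \mathrm{wf}(G)=\lim_{m\to\infty}\frac{\gamma_m(v)}{m}. \]
   Context: $S^1=\mathbb{R}/\mathbb{Z}$; $\preceq$/$\prec$ denote clockwise cyclic order; $\vec d(p,q)\in[0,1)$ is the clockwise distance from $p$ to $q$. A directed graph has no loops and no pair of opposite edges; $N^+[G,v]=\{v\}\cup\{w:v\to w\}$. A directed graph with vertex set $V\subseteq S^1$ is cyclic if whenever $v\to u$ is an edge, $v\to w$ and $w\to u$ are edges for all $w\in V$ with $v\prec w\prec u\prec v$. For $0\le k<n/2$, $C_n^k$ is the cyclic graph on $\{0,\dots,n-1\}$ with edges $i\to i+s\bmod n$, $1\le s\le k$. A cyclic homomorphism is a directed-graph homomorphism (edges map to edges or collapse) weakly preserving cyclic order and non-constant when the domain has a directed cycle. For finite cyclic $G$, $\mathrm{wf}(G)=\sup\{k/n:\exists$ cyclic homomorphism $C_n^k\to G\}$; for arbitrary cyclic $G$, $\mathrm{wf}(G)=\sup\{\mathrm{wf}(G[W]):W\subseteq V$ finite$\}$. For $m\ge1$ and $v_0\in V$, $\gamma_m(v_0)=\sup\{\sum_{i=0}^{m-1}\vec d(v_i,v_{i+1}) : v_1,\dots,v_m\in V,\ v_{i+1}\in N^+[G,v_i]\}$ (the supremum of total clockwise length of length-$m$ directed walks from $v_0$, where staying put is allowed). *)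

theory Defs
  imports Complex_Main
begin

text \<open>Points of the circle S^1 = R/Z are represented by their unique
  representatives in [0,1). A graph is given by a vertex set V and an edge
  relation E.\<close>

definition on_circle :: "real set \<Rightarrow> bool" where
  "on_circle V \<longleftrightarrow> V \<subseteq> {0..<1}"

definition cdist :: "real \<Rightarrow> real \<Rightarrow> real" where
  "cdist p q = frac (q - p)"

text \<open>Weak clockwise cyclic order p \<preceq> q \<preceq> r (\<preceq> p).\<close>
definition cw_le :: "real \<Rightarrow> real \<Rightarrow> real \<Rightarrow> bool" where
  "cw_le p q r \<longleftrightarrow> cdist p q + cdist q r + cdist r p \<le> 1"

definition cw_lt :: "real \<Rightarrow> real \<Rightarrow> real \<Rightarrow> bool" where
  "cw_lt p q r \<longleftrightarrow> p \<noteq> q \<and> q \<noteq> r \<and> r \<noteq> p \<and> cw_le p q r"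

definition digraph :: "real set \<Rightarrow> (real \<Rightarrow> real \<Rightarrow> bool) \<Rightarrow> bool" where
  "digraph V E \<longleftrightarrow> on_circle V \<and>
     (\<forall>x y. E x y \<longrightarrow> x \<in> V \<and> y \<in> V) \<and>
     (\<forall>x. \<not> E x x) \<and> (\<forall>x y. E x y \<longrightarrow> \<not> E y x)"

definition cyclic_graph :: "real set \<Rightarrow> (real \<Rightarrow> real \<Rightarrow> bool) \<Rightarrow> bool" where
  "cyclic_graph V E \<longleftrightarrow> digraph V E \<and>
     (\<forall>v\<in>V. \<forall>u\<in>V. \<forall>w\<in>V. E v u \<and> cw_lt v w u \<longrightarrow> E v w \<and> E w u)"

definition Cverts :: "nat \<Rightarrow> real set" where
  "Cverts n = {real i / real n | i. i < n}"

definition Cedge :: "nat \<Rightarrow> nat \<Rightarrow> real \<Rightarrow> real \<Rightarrow> bool" where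
  "Cedge n k x y \<longleftrightarrow> (\<exists>i s. i < n \<and> 1 \<le> s \<and> s \<le> k \<and>
      x = real i / real n \<and> y = real ((i + s) mod n) / real n)"

definition has_dcycle :: "real set \<Rightarrow> (real \<Rightarrow> real \<Rightarrow> bool) \<Rightarrow> bool" where
  "has_dcycle V E \<longleftrightarrow> (\<exists>v\<in>V. (v, v) \<in> {(a, b). E a b}\<^sup>+)"

definition cyclic_hom ::
  "real set \<Rightarrow> (real \<Rightarrow> real \<Rightarrow> bool) \<Rightarrow> real set \<Rightarrow> (real \<Rightarrow> real \<Rightarrow> bool)
   \<Rightarrow> (real \<Rightarrow> real) \<Rightarrow> bool" where
  "cyclic_hom V1 E1 V2 E2 f \<longleftrightarrow>
     (\<forall>x\<in>V1. f x \<in> V2) \<and>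
     (\<forall>x y. E1 x y \<longrightarrow> E2 (f x) (f y) \<or> f x = f y) \<and>
     (\<forall>x\<in>V1. \<forall>y\<in>V1. \<forall>z\<in>V1. cw_le x y z \<longrightarrow> cw_le (f x) (f y) (f z)) \<and>
     (has_dcycle V1 E1 \<longrightarrow> (\<exists>x\<in>V1. \<exists>y\<in>V1. f x \<noteq> f y))"

definition wf_fin :: "real set \<Rightarrow> (real \<Rightarrow> real \<Rightarrow> bool) \<Rightarrow> real" where
  "wf_fin V E = Sup {real k / real n | n k. 2 * k < n \<and>
      (\<exists>f. cyclic_hom (Cverts n) (Cedge n k) V E f)}"

definition induced :: "(real \<Rightarrow> real \<Rightarrow> bool) \<Rightarrow> real set \<Rightarrow> real \<Rightarrow> real \<Rightarrow> bool" where
  "induced E W x y \<longleftrightarrow> x \<in> W \<and> y \<in> W \<and> E x y"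

text \<open>Winding fraction of an arbitrary cyclic graph (sup over nonempty finite
  induced subgraphs; the empty subgraph contributes nothing).\<close>
definition wf :: "real set \<Rightarrow> (real \<Rightarrow> real \<Rightarrow> bool) \<Rightarrow> real" where
  "wf V E = Sup {wf_fin W (induced E W) | W. finite W \<and> W \<subseteq> V \<and> W \<noteq> {}}"

definition gamma :: "real set \<Rightarrow> (real \<Rightarrow> real \<Rightarrow> bool) \<Rightarrow> nat \<Rightarrow> real \<Rightarrow> real" where
  "gamma V E m v = Sup {(\<Sum>i<m. cdist (w i) (w (Suc i))) | w.
      w 0 = v \<and> (\<forall>i<m. w (Suc i) \<in> V \<and> (w (Suc i) = w i \<or> E (w i) (w (Suc i))))}"

end

theory Submission
  imports Defs
begin


lemma cdist_ge0: "0 \<le> cdist p q" by (simp add: cdist_def)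
lemma cdist_lt1: "cdist p q < 1" by (simp add: cdist_def frac_lt_1)

lemma frac_int_diff: "x - y = of_int j \<Longrightarrow> frac x = frac y"
  by (metis add.commute diff_add_cancel frac_add_of_int_left)

lemma lift_dist: "x \<le> y \<Longrightarrow> y < x + 1 \<Longrightarrow> cdist (frac x) (frac y) = y - x"
proof -
  assume a: "x \<le> y" "y < x + 1"
  have "frac (frac y - frac x) = frac (y - x)"
    by (rule frac_int_diff[of _ _ "\<lfloor>x\<rfloor> - \<lfloor>y\<rfloor>"]) (simp add: frac_def)
  also have "\<dots> = y - x" using a by (simp add: frac_eq)
  finally show ?thesis by (simp add: cdist_def)
qed

lemma cdist_self[simp]: "cdist p p = 0" by (simp add: cdist_def)

lemma unit_frac: "p \<in> {0..<1} \<Longrightarrow> frac p = p" by simp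

lemma cdist_eq0: "p \<in> {0..<1} \<Longrightarrow> q \<in> {0..<1} \<Longrightarrow> cdist p q = 0 \<longleftrightarrow> p = q"
proof -
  assume a: "p \<in> {0..<1}" "q \<in> {0..<1}"
  show ?thesis
  proof
    assume "cdist p q = 0"
    then have "q - p \<in> \<int>" by (simp add: cdist_def)
    then obtain j where "q - p = of_int j" by (auto elim: Ints_cases)
    with a have "j = 0" by auto
    with \<open>q - p = of_int j\<close> show "p = q" by simp
  qed simp
qed

lemma cdist_alt: "p \<in> {0..<1} \<Longrightarrow> q \<in> {0..<1} \<Longrightarrow>
   cdist p q = (if p \<le> q then q - p else q - p + 1)"
  unfolding cdist_def by (auto simp: frac_unique_iff)

lemma cdist_swap: "p \<in> {0..<1} \<Longrightarrow> q \<in> {0..<1} \<Longrightarrow> p \<noteq> q \<Longrightarrow> cdist p q + cdist q p = 1"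
  by (auto simp: cdist_alt)

lemma cw_le_iff: "p \<in> {0..<1} \<Longrightarrow> q \<in> {0..<1} \<Longrightarrow> r \<in> {0..<1} \<Longrightarrow>
   cw_le p q r \<longleftrightarrow> p = r \<or> cdist p q \<le> cdist p r"
  unfolding cw_le_def by (auto simp: cdist_alt)

lemma cdist_via: "p \<in> {0..<1} \<Longrightarrow> q \<in> {0..<1} \<Longrightarrow> r \<in> {0..<1} \<Longrightarrow> r \<noteq> p \<Longrightarrow>
   cdist p q < cdist p r \<Longrightarrow> cdist r q = cdist r p + cdist p q"
  by (auto simp: cdist_alt split: if_splits)

lemma cw_lt_lift: "x < y \<Longrightarrow> y < z \<Longrightarrow> z < x + 1 \<Longrightarrow> cw_lt (frac x) (frac y) (frac z)"
proof -
  assume a: "x < y" "y < z" "z < x + 1"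
  have d1: "cdist (frac x) (frac y) = y - x" "cdist (frac x) (frac z) = z - x" 
    "cdist (frac y) (frac z) = z - y"
    using a by (simp_all add: lift_dist)
  have in01: "frac u \<in> {0..<1}" for u :: real by (simp add: frac_lt_1)
  have ne: "frac x \<noteq> frac y" "frac y \<noteq> frac z" "frac z \<noteq> frac x"
    using cdist_eq0[OF in01 in01, of x y] cdist_eq0[OF in01 in01, of y z] cdist_eq0[OF in01 in01, of x z] d1 a
    by auto
  show ?thesis unfolding cw_lt_def using ne cw_le_iff[OF in01 in01 in01] d1 a by auto
qed



lemma cg_facts:
  assumes "cyclic_graph V E"
  shows "V \<subseteq> {0..<1}" "\<And>x y. E x y \<Longrightarrow> x \<in> V \<and> y \<in> V" "\<And>x. \<not> E x x"
    "\<And>x y. E x y \<Longrightarrow> \<not> E y x"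
    "\<And>v u w. v \<in> V \<Longrightarrow> u \<in> V \<Longrightarrow> w \<in> V \<Longrightarrow> E v u \<Longrightarrow> cw_lt v w u \<Longrightarrow> E v w \<and> E w u"
  using assms unfolding cyclic_graph_def digraph_def on_circle_def by blast+

locale fing =
  fixes V :: "real set" and E :: "real \<Rightarrow> real \<Rightarrow> bool" and W :: "real set"
  assumes cyc: "cyclic_graph V E" and fin: "finite W" and sub: "W \<subseteq> V"
begin

lemma W01: "w \<in> W \<Longrightarrow> w \<in> {0..<1}"
  using cg_facts(1)[OF cyc] sub by blast

definition S where "S x = {y. frac y \<in> W \<and> x \<le> y \<and> y < x + 1 \<and> (y = x \<or> E (frac x) (frac y))}"
definition T where "T x = Max (S x)"

lemma S_fin: "finite (S x)"
proof -
  have "S x \<subseteq> (\<lambda>w. x + cdist (frac x) w) ` W"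
  proof
    fix y assume "y \<in> S x"
    then have "frac y \<in> W" "x \<le> y" "y < x + 1" by (auto simp: S_def)
    then show "y \<in> (\<lambda>w. x + cdist (frac x) w) ` W"
      by (intro image_eqI[of _ _ "frac y"]) (simp_all add: lift_dist)
  qed
  then show ?thesis using fin finite_subset by blast
qed

lemma x_in_S: "frac x \<in> W \<Longrightarrow> x \<in> S x" by (simp add: S_def)

lemma T_in: "frac x \<in> W \<Longrightarrow> T x \<in> S x"
  unfolding T_def using S_fin x_in_S by (metis Max_in empty_iff)

lemma S_le_T: "y \<in> S x \<Longrightarrow> y \<le> T x"
  unfolding T_def using S_fin by simp

lemma T_props: assumes "frac x \<in> W"
  shows "x \<le> T x" "T x < x + 1" "frac (T x) \<in> W" "T x = x \<or> E (frac x) (frac (T x))"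
  using T_in[OF assms] by (auto simp: S_def)

lemma S_shift: "y \<in> S x \<Longrightarrow> y + of_int j \<in> S (x + of_int j)"
  by (auto simp: S_def)

lemma T_shift: assumes "frac x \<in> W" shows "T (x + of_int j) = T x + of_int j"
proof (rule antisym)
  have "frac (x + of_int j) \<in> W" using assms by simp
  from S_shift[OF T_in[OF this], of "-j"] have "T (x + of_int j) - of_int j \<in> S x" by simp
  then show "T (x + of_int j) \<le> T x + of_int j" using S_le_T by fastforce
next
  show "T x + of_int j \<le> T (x + of_int j)" using S_shift[OF T_in[OF assms]] S_le_T by blast
qed

lemma cycE: "v \<in> W \<Longrightarrow> u \<in> W \<Longrightarrow> w \<in> W \<Longrightarrow> E v u \<Longrightarrow> cw_lt v w u \<Longrightarrow> E v w \<and> E w u"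
  using cg_facts(5)[OF cyc] sub by blast

lemma between: assumes "frac x \<in> W" "frac y \<in> W" "x \<le> y" "y \<le> T x"
  shows "y \<in> S x"
proof -
  note tp = T_props[OF assms(1)]
  consider "y = x" | "y = T x" | "x < y" "y < T x" using assms by linarith
  then show ?thesis
  proof cases
    case 1 then show ?thesis using x_in_S assms by simp
  next
    case 2 then show ?thesis using T_in assms by simp
  next
    case 3
    then have e: "E (frac x) (frac (T x))" using tp by auto
    have "cw_lt (frac x) (frac y) (frac (T x))" using 3 tp by (intro cw_lt_lift) auto
    then have "E (frac x) (frac y)" using cycE[OF assms(1) tp(3) assms(2) e] by blast
    then show ?thesis using 3 tp assms unfolding S_def by auto
  qed
qed

lemma T_mono: assumes "frac x \<in> W" "frac y \<in> W" "x \<le> y" shows "T x \<le> T y"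
proof (cases "T x \<le> y")
  case True then show ?thesis using T_props(1)[OF assms(2)] by linarith
next
  case False
  note tp = T_props[OF assms(1)]
  show ?thesis
  proof (cases "y = x")
    case True then show ?thesis by simp
  next
    case ne: False
    then have 3: "x < y" "y < T x" using False assms by auto
    then have e: "E (frac x) (frac (T x))" using tp by auto
    have "cw_lt (frac x) (frac y) (frac (T x))" using 3 tp by (intro cw_lt_lift) auto
    then have "E (frac y) (frac (T x))" using cycE[OF assms(1) tp(3) assms(2) e] by blast
    then have "T x \<in> S y" using 3 tp unfolding S_def by auto
    then show ?thesis by (rule S_le_T)
  qed
qed

lemma Tn_W: "frac x \<in> W \<Longrightarrow> frac ((T ^^ a) x) \<in> W"
  by (induction a) (auto simp: T_props)

lemma Tn_shift: "frac x \<in> W \<Longrightarrow> (T ^^ a) (x + of_int j) = (T ^^ a) x + of_int j"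
  by (induction a) (auto simp: T_shift Tn_W)

lemma Tn_mono: "frac x \<in> W \<Longrightarrow> frac y \<in> W \<Longrightarrow> x \<le> y \<Longrightarrow> (T ^^ a) x \<le> (T ^^ a) y"
  by (induction a) (auto intro!: T_mono Tn_W)

lemma Tn_ge: "frac x \<in> W \<Longrightarrow> x \<le> (T ^^ a) x"
  by (induction a) (auto intro: order_trans T_props(1) Tn_W)

lemma Tn_le: "frac x \<in> W \<Longrightarrow> (T ^^ a) x \<le> x + real a"
proof (induction a)
  case (Suc a)
  then show ?case using T_props(2)[OF Tn_W[OF Suc.prems, of a]] by simp
qed simp

end


context fing begin

lemma walk_le_T:
  assumes w0: "w 0 = v" and vW: "v \<in> W"
    and st: "\<forall>i<m. w (Suc i) \<in> W \<and> (w (Suc i) = w i \<or> E (w i) (w (Suc i)))"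
  shows "(\<Sum>i<m. cdist (w i) (w (Suc i))) \<le> (T ^^ m) v - v"
proof -
  define Q where "Q j = v + (\<Sum>i<j. cdist (w i) (w (Suc i)))" for j
  have fv: "frac v = v" using W01[OF vW] by simp
  have "j \<le> m \<longrightarrow> frac (Q j) = w j \<and> Q j \<le> (T ^^ j) v" for j
  proof (induction j)
    case 0 then show ?case using fv w0 by (simp add: Q_def)
  next
    case (Suc j)
    show ?case
    proof
      assume jm: "Suc j \<le> m"
      with Suc have IH: "frac (Q j) = w j" "Q j \<le> (T ^^ j) v" by auto
      have wj: "w j \<in> W" using IH(1) st jm w0 vW by (cases j) auto
      have wS: "w (Suc j) \<in> W" "w (Suc j) = w j \<or> E (w j) (w (Suc j))" using st jm by auto
      have Qs: "Q (Suc j) = Q j + cdist (frac (Q j)) (w (Suc j))" using IH by (simp add: Q_def)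
      have f1: "frac (Q (Suc j)) = w (Suc j)"
      proof -
        have "frac (Q (Suc j)) = frac (Q j + (w (Suc j) - frac (Q j)))"
          unfolding Qs cdist_def by (simp only: frac_add_simps)
        also have "\<dots> = frac (w (Suc j) + of_int \<lfloor>Q j\<rfloor>)" by (simp add: frac_def algebra_simps)
        also have "\<dots> = w (Suc j)" using W01[OF wS(1)] by simp
        finally show ?thesis .
      qed
      have "Q (Suc j) \<in> S (Q j)"
        unfolding S_def using f1 wS IH(1) Qs cdist_ge0[of "frac (Q j)" "w (Suc j)"]
          cdist_lt1[of "frac (Q j)" "w (Suc j)"] by auto
      then have "Q (Suc j) \<le> T (Q j)" by (rule S_le_T)
      also have "\<dots> \<le> T ((T ^^ j) v)" using IH wj by (intro T_mono Tn_W) (auto simp: fv vW)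
      finally show "frac (Q (Suc j)) = w (Suc j) \<and> Q (Suc j) \<le> (T ^^ Suc j) v" using f1 by simp
    qed
  qed
  then have "Q m \<le> (T ^^ m) v" by simp
  then show ?thesis by (simp add: Q_def)
qed

lemma phi_lb: assumes "frac v \<in> W" "frac y \<in> W"
  shows "(T ^^ m) y - y \<ge> (T ^^ m) v - v - 1"
proof -
  define j where "j = \<lceil>v - y\<rceil>"
  have j: "v \<le> y + of_int j" "y + of_int j < v + 1" unfolding j_def by linarith+
  have "(T ^^ m) v \<le> (T ^^ m) (y + of_int j)" using assms j by (intro Tn_mono) auto
  also have "\<dots> = (T ^^ m) y + of_int j" using assms by (simp add: Tn_shift)
  finally show ?thesis using j by linarith
qed

lemma phi_iter: assumes "frac v \<in> W" "frac y \<in> W"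
  shows "(T ^^ (c * m)) y - y \<ge> real c * ((T ^^ m) v - v - 1)"
proof (induction c)
  case (Suc c)
  have "(T ^^ (Suc c * m)) y = (T ^^ m) ((T ^^ (c * m)) y)" by (simp add: funpow_add)
  moreover have "(T ^^ m) ((T ^^ (c * m)) y) - (T ^^ (c * m)) y \<ge> (T ^^ m) v - v - 1"
    using assms by (intro phi_lb Tn_W) auto
  ultimately show ?case using Suc by (simp add: algebra_simps)
qed simp

lemma phi_gen: assumes "frac v \<in> W" "frac y \<in> W"
  shows "(T ^^ a) y - y \<ge> real (a div m) * ((T ^^ m) v - v - 1)"
proof -
  have "a = a mod m + (a div m) * m" by simp
  then have "(T ^^ a) y = (T ^^ (a mod m)) ((T ^^ ((a div m) * m)) y)"
    by (metis funpow_add o_apply)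
  also have "\<dots> \<ge> (T ^^ ((a div m) * m)) y" using assms by (intro Tn_ge Tn_W)
  finally show ?thesis using phi_iter[OF assms, of "a div m" m] by linarith
qed

end


locale Fcon = fing +
  fixes v :: real and m k :: nat
  assumes vW: "v \<in> W" and mpos: "0 < m" and kA: "real k + 2 \<le> (T ^^ m) v - v"
begin

lemma fv: "frac v = v" using W01[OF vW] by simp
lemma fvW: "frac v \<in> W" using fv vW by simp

definition b :: "nat \<Rightarrow> int \<Rightarrow> int" where
  "b a i = \<lfloor>(real a * real k - real_of_int i) / real m\<rfloor>"
definition val :: "nat \<Rightarrow> int \<Rightarrow> real" where
  "val a i = (T ^^ a) v - of_int (b a i)"
definition N :: nat where "N = m * (k + 3)"
definition F :: "int \<Rightarrow> real" where "F i = Min ((\<lambda>a. val a i) ` {..N})"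

lemma val_lb: "val a i \<ge> v + real a / real m - (real k + 1) + real_of_int i / real m"
proof -
  have m: "real m > 0" using mpos by simp
  have h1: "(T ^^ a) v - v \<ge> real (a div m) * ((T ^^ m) v - v - 1)" using phi_gen[OF fvW fvW] .
  have h2: "real (a div m) * ((T ^^ m) v - v - 1) \<ge> real (a div m) * (real k + 1)"
    using kA by (intro mult_left_mono) auto
  have "a = m * (a div m) + a mod m" by simp
  then have "real a = real m * real (a div m) + real (a mod m)"
    by (metis of_nat_add of_nat_mult)
  moreover have "real (a mod m) < real m" using mpos by simp
  ultimately have h3: "real (a div m) \<ge> real a / real m - 1" using m 
    by (simp add: field_simps)
  then have h4: "real (a div m) * (real k + 1) \<ge> (real a / real m - 1) * (real k + 1)"
    by (intro mult_right_mono) auto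
  have h5: "of_int (b a i) \<le> (real a * real k - real_of_int i) / real m"
    unfolding b_def by (rule of_int_floor_le)
  have h6: "(real a / real m - 1) * (real k + 1) - (real a * real k - real_of_int i) / real m
     = real a / real m - (real k + 1) + real_of_int i / real m"
    using m by (simp add: field_simps)
  show ?thesis unfolding val_def using h1 h2 h4 h5 h6 by linarith
qed

lemma val0_ub: "val 0 i \<le> v + real_of_int i / real m + 1"
proof -
  have "of_int (b 0 i) \<ge> - real_of_int i / real m - 1"
    unfolding b_def using real_of_int_floor_gt_diff_one[of "- real_of_int i / real m"] by simp
  then show ?thesis unfolding val_def by simp
qed

lemma F_le: "F i \<le> val a i"
proof (cases "a \<le> N")
  case True then show ?thesis unfolding F_def by (intro Min_le) auto
next
  case False
  have m: "real m > 0" using mpos by simp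
  have "real a > real m * (real k + 3)" proof -
    have "a > m * (k + 3)" using False unfolding N_def by simp
    then have "real a > real (m * (k + 3))" by linarith
    then show ?thesis by simp
  qed
  then have "real a / real m > real k + 3" using m by (simp add: field_simps)
  then have "val a i > val 0 i" using val_lb[of a i] val0_ub[of i] by linarith
  moreover have "F i \<le> val 0 i" unfolding F_def by (intro Min_le) auto
  ultimately show ?thesis by linarith
qed

lemma F_ex: "\<exists>a. F i = val a i"
proof -
  have "F i \<in> (\<lambda>a. val a i) ` {..N}" unfolding F_def by (intro Min_in) auto
  then show ?thesis by auto
qed

lemma val_W: "frac (val a i) \<in> W"
  unfolding val_def using Tn_W[OF fvW] by (metis diff_conv_add_uminus frac_add_of_int_right of_int_minus)

lemma F_W: "frac (F i) \<in> W" using F_ex[of i] val_W by metis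

lemma b_shift: "b a (i + int m * c) = b a i - c"
proof -
  have m: "real m > 0" using mpos by simp
  have "(real a * real k - real_of_int (i + int m * c)) / real m
       = (real a * real k - real_of_int i) / real m + of_int (- c)"
    using m by (simp add: field_simps)
  then show ?thesis unfolding b_def by simp
qed

lemma val_shift: "val a (i + int m * c) = val a i + of_int c"
  unfolding val_def b_shift by simp

lemma F_shift: "F (i + int m * c) = F i + of_int c"
proof (rule antisym)
  obtain a where a: "F i = val a i" using F_ex by blast
  show "F (i + int m * c) \<le> F i + of_int c" using F_le[of "i + int m * c" a] a val_shift by simp
next
  obtain a where a: "F (i + int m * c) = val a (i + int m * c)" using F_ex by blast
  show "F i + of_int c \<le> F (i + int m * c)" using F_le[of i a] a val_shift by simp
qed

lemma b_mono: "i \<le> j \<Longrightarrow> b a j \<le> b a i"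
  unfolding b_def using mpos by (intro floor_mono divide_right_mono) auto

lemma F_mono: assumes "i \<le> j" shows "F i \<le> F j"
proof -
  obtain a where a: "F j = val a j" using F_ex by blast
  have "val a i \<le> val a j" unfolding val_def using b_mono[OF assms, of a] by simp
  then show ?thesis using F_le[of i a] a by linarith
qed

lemma b_step: "b (Suc a) (i + int k) = b a i"
  unfolding b_def by (simp add: algebra_simps)

lemma F_T: "F (i + int k) \<le> T (F i)"
proof -
  obtain a where a: "F i = val a i" using F_ex by blast
  have "T (val a i) = T ((T ^^ a) v + of_int (- b a i))" unfolding val_def by simp
  also have "\<dots> = (T ^^ Suc a) v + of_int (- b a i)" using T_shift[OF Tn_W[OF fvW, of a], of "- b a i"] by simp
  also have "\<dots> = val (Suc a) (i + int k)" unfolding val_def b_step by simp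
  finally show ?thesis using F_le[of "i + int k" "Suc a"] a by simp
qed

lemma F_S: assumes "0 \<le> s" "s \<le> int k" shows "F (i + s) \<in> S (F i)"
proof -
  have "F i \<le> F (i + s)" using assms by (intro F_mono) auto
  moreover have "F (i + s) \<le> F (i + int k)" using assms by (intro F_mono) auto
  ultimately show ?thesis using F_T[of i] F_W by (intro between) auto
qed

lemma F_step_lt: assumes "1 \<le> k" shows "F (i + 1) < F i + 1"
proof -
  have "F (i + 1) \<le> F (i + int k)" using assms by (intro F_mono) auto
  then show ?thesis using F_T[of i] T_props(2)[OF F_W[of i]] by linarith
qed

end


lemma cdist_grid:
  assumes "0 < m" "i < m" "j < m"
  shows "cdist (real i / real m) (real j / real m) = real_of_int ((int j - int i) mod int m) / real m"
proof -
  define d where "d = int j - int i"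
  have m: "real m > 0" using assms by simp
  have eq: "real_of_int d = real m * real_of_int (d div int m) + real_of_int (d mod int m)"
  proof -
    have "d = int m * (d div int m) + d mod int m" by simp
    then have "real_of_int d = real_of_int (int m * (d div int m) + d mod int m)" by (rule arg_cong)
    then show ?thesis unfolding of_int_add of_int_mult of_int_of_nat_eq .
  qed
  have r: "0 \<le> d mod int m" "d mod int m < int m" using assms by auto
  have "real j / real m - real i / real m = real_of_int d / real m" unfolding d_def using m
    by (simp add: field_simps)
  also have "\<dots> = real_of_int (d mod int m) / real m + of_int (d div int m)"
    using m eq by (simp add: field_simps)
  finally have x: "real j / real m - real i / real m = real_of_int (d mod int m) / real m + of_int (d div int m)" .
  have "0 \<le> real_of_int (d mod int m) / real m" using r m by simp
  moreover have "real_of_int (d mod int m) < real m"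
    using r(2) of_int_less_iff[of "d mod int m" "int m"] by simp
  then have "real_of_int (d mod int m) / real m < 1" using m by (simp add: field_simps)
  ultimately show ?thesis unfolding cdist_def x d_def by simp
qed

lemma frac_add_real_nat[simp]: "frac (x + real n) = frac x"
  using frac_add_of_int_right[of x "int n"] by simp

lemma frac_diff_of_int[simp]: "frac (x - of_int n) = frac x"
  using frac_add_of_int_right[of x "- n"] by simp

context Fcon begin

lemma F_frac_mod: "frac (F (int j + int m * c)) = frac (F (int j))"
  using F_shift by simp

lemma F_frac_nat_mod: "frac (F (int (j mod m))) = frac (F (int j))"
proof -
  have "j = j mod m + m * (j div m)" by simp
  then have "int j = int (j mod m) + int m * int (j div m)" by (metis of_nat_add of_nat_mult)
  then show ?thesis using F_shift[of "int (j mod m)" "int (j div m)"] by simp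
qed

definition f :: "real \<Rightarrow> real" where "f r = frac (F (round (r * real m)))"

lemma f_at: "f (real i / real m) = frac (F (int i))"
  using mpos unfolding f_def by simp

lemma f_hom: assumes k1: "1 \<le> k"
  shows "cyclic_hom (Cverts m) (Cedge m k) W (induced E W) f"
  unfolding cyclic_hom_def
proof (intro conjI ballI allI impI)
  fix x assume "x \<in> Cverts m"
  then obtain i where "x = real i / real m" by (auto simp: Cverts_def)
  then show "f x \<in> W" by (simp add: f_at F_W)
next
  fix x y assume "Cedge m k x y"
  then obtain i s where ie: "i < m" "1 \<le> s" "s \<le> k" "x = real i / real m" 
    "y = real ((i + s) mod m) / real m" unfolding Cedge_def by blast
  have fx: "f x = frac (F (int i))" using ie by (simp add: f_at)
  have fy: "f y = frac (F (int i + int s))" using ie by (simp add: f_at F_frac_nat_mod)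
  have "F (int i + int s) \<in> S (F (int i))" using ie by (intro F_S) auto
  then have "F (int i + int s) = F (int i) \<or> E (frac (F (int i))) (frac (F (int i + int s)))"
    by (auto simp: S_def)
  then show "induced E W (f x) (f y) \<or> f x = f y"
    unfolding fx fy induced_def using F_W by auto
next
  fix x y z assume xyz: "x \<in> Cverts m" "y \<in> Cverts m" "z \<in> Cverts m" "cw_le x y z"
  obtain i j l where ijl: "i < m" "j < m" "l < m" "x = real i / real m" "y = real j / real m"
    "z = real l / real m" using xyz(1-3) by (auto simp: Cverts_def)
  have m: "real m > 0" using mpos by simp
  have in01: "real a / real m \<in> {0..<1}" if "a < m" for a using that m by (simp add: field_simps)
  have inF: "frac u \<in> {0..<1}" for u :: real by (simp add: frac_lt_1)
  define dj where "dj = (int j - int i) mod int m"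
  define dl where "dl = (int l - int i) mod int m"
  have d: "0 \<le> dj" "dj < int m" "0 \<le> dl" "dl < int m" using mpos unfolding dj_def dl_def by auto
  have c: "i = l \<or> dj \<le> dl"
  proof -
    have "x = z \<or> cdist x y \<le> cdist x z"
      using xyz(4) cw_le_iff[OF in01[OF ijl(1)] in01[OF ijl(2)] in01[OF ijl(3)]] ijl by simp
    then show ?thesis using ijl m cdist_grid[OF mpos, of i j] cdist_grid[OF mpos, of i l]
      unfolding dj_def dl_def by (auto simp: divide_le_cancel)
  qed
  have fxi: "f x = frac (F (int i))" using ijl by (simp add: f_at)
  have fyj: "f y = frac (F (int i + dj))"
  proof -
    have "int i + dj = int j + int m * (- ((int j - int i) div int m))"
      unfolding dj_def using minus_mult_div_eq_mod[of "int j - int i" "int m"] by (simp add: algebra_simps)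
    then show ?thesis using ijl F_shift[of "int j" "- ((int j - int i) div int m)"] by (simp add: f_at)
  qed
  have fzl: "f z = frac (F (int i + dl))"
  proof -
    have "int i + dl = int l + int m * (- ((int l - int i) div int m))"
      unfolding dl_def using minus_mult_div_eq_mod[of "int l - int i" "int m"] by (simp add: algebra_simps)
    then show ?thesis using ijl F_shift[of "int l" "- ((int l - int i) div int m)"] by (simp add: f_at)
  qed
  show "cw_le (f x) (f y) (f z)"
  proof (cases "i = l")
    case True
    then have "f x = f z" using ijl by simp
    then show ?thesis using cw_le_iff[OF inF inF inF] fxi fyj fzl by simp
  next
    case False
    then have dd: "dj \<le> dl" using c by simp
    have m1: "F (int i) \<le> F (int i + dj)" "F (int i + dj) \<le> F (int i + dl)"
      "F (int i + dl) \<le> F (int i) + 1"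
    proof -
      show "F (int i) \<le> F (int i + dj)" using d by (intro F_mono) auto
      show "F (int i + dj) \<le> F (int i + dl)" using dd by (intro F_mono) auto
      have "F (int i + dl) \<le> F (int i + int m * 1)" using d by (intro F_mono) auto
      then show "F (int i + dl) \<le> F (int i) + 1" using F_shift[of "int i" 1] by simp
    qed
    show ?thesis
    proof (cases "F (int i + dl) = F (int i) + 1")
      case True
      then have "f z = f x" using fxi fzl by (simp add: frac_1_eq)
      then show ?thesis using cw_le_iff[OF inF inF inF] fxi fyj fzl by simp
    next
      case False
      then have lt: "F (int i + dl) < F (int i) + 1" using m1 by simp
      have "cdist (f x) (f y) = F (int i + dj) - F (int i)"
        using m1 lt fxi fyj by (simp add: lift_dist)
      moreover have "cdist (f x) (f z) = F (int i + dl) - F (int i)"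
        using m1 lt fxi fzl by (simp add: lift_dist)
      ultimately have "cdist (f x) (f y) \<le> cdist (f x) (f z)" using m1 by simp
      then show ?thesis using cw_le_iff[OF inF inF inF] fxi fyj fzl by simp
    qed
  qed
next
  assume "has_dcycle (Cverts m) (Cedge m k)"
  have "\<exists>i<m. F (int i + 1) \<noteq> F (int i)"
  proof (rule ccontr)
    assume "\<not> ?thesis"
    then have all: "\<forall>i<m. F (int i + 1) = F (int i)" by auto
    have "i \<le> m \<longrightarrow> F (int i) = F 0" for i
    proof (induction i)
      case (Suc i)
      show ?case
      proof
        assume "Suc i \<le> m"
        then have "F (int i + 1) = F (int i)" "F (int i) = F 0" using all Suc by auto
        then show "F (int (Suc i)) = F 0" by (simp add: add.commute)
      qed
    qed simp
    then have "F (int m) = F 0" by simp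
    moreover have "F (int m) = F 0 + 1" using F_shift[of 0 1] by simp
    ultimately show False by simp
  qed
  then obtain i where i: "i < m" "F (int i + 1) \<noteq> F (int i)" by blast
  have lt: "F (int i) < F (int i + 1)" "F (int i + 1) < F (int i) + 1"
    using i F_mono[of "int i" "int i + 1"] F_step_lt[OF k1] by auto
  have "cdist (frac (F (int i))) (frac (F (int i + 1))) = F (int i + 1) - F (int i)"
    using lt by (simp add: lift_dist)
  then have ne: "frac (F (int i)) \<noteq> frac (F (int i + 1))" using lt by auto
  have "real i / real m \<in> Cverts m" using i by (auto simp: Cverts_def)
  moreover have "real ((i + 1) mod m) / real m \<in> Cverts m" using mpos by (auto simp: Cverts_def)
  moreover have "f (real i / real m) \<noteq> f (real ((i + 1) mod m) / real m)"
    using ne by (simp add: f_at F_frac_nat_mod add.commute)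
  ultimately show "\<exists>x\<in>Cverts m. \<exists>y\<in>Cverts m. f x \<noteq> f y" by blast
qed

lemma no_big_k: assumes "1 \<le> k" "k < m" "m \<le> 2 * k" shows False
proof -
  have F0: "F (int m) = F 0 + 1" using F_shift[of 0 1] by simp
  have Sk: "F (0 + int k) \<in> S (F 0)" using assms by (intro F_S) auto
  have Sm: "F (int k + int (m - k)) \<in> S (F (int k))" using assms by (intro F_S) auto
  have mk: "int k + int (m - k) = int m" using assms by simp
  have lt1: "F (int k) < F 0 + 1" using Sk by (auto simp: S_def)
  have "F (int m) \<noteq> F (int k)" using F0 lt1 by auto
  then have e2: "E (frac (F (int k))) (frac (F 0))"
    using Sm F0 unfolding mk by (auto simp: S_def frac_1_eq)
  have "F (int k) \<noteq> F 0"
    using Sm F0 unfolding mk by (auto simp: S_def)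
  then have e1: "E (frac (F 0)) (frac (F (int k)))" using Sk by (auto simp: S_def)
  show False using e1 e2 cg_facts(4)[OF cyc] by blast
qed

end


definition wfset :: "nat \<Rightarrow> nat \<Rightarrow> real set \<Rightarrow> (real \<Rightarrow> real \<Rightarrow> bool) \<Rightarrow> bool" where
  "wfset n k V E \<longleftrightarrow> 2 * k < n \<and> (\<exists>f. cyclic_hom (Cverts n) (Cedge n k) V E f)"

lemma wf_fin_set_eq: "{real k / real n | n k. 2 * k < n \<and> (\<exists>f. cyclic_hom (Cverts n) (Cedge n k) V E f)}
   = {real k / real n | n k. wfset n k V E}"
  unfolding wfset_def by simp

lemma wf_fin_bdd: "bdd_above {real k / real n | n k. 2 * k < n \<and> (\<exists>f. cyclic_hom (Cverts n) (Cedge n k) V E f)}"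
proof (rule bdd_aboveI[of _ "1/2"])
  fix x assume "x \<in> {real k / real n | n k. 2 * k < n \<and> (\<exists>f. cyclic_hom (Cverts n) (Cedge n k) V E f)}"
  then obtain n k where x: "x = real k / real n" "2 * k < n" by auto
  then have "2 * real k < real n" by linarith
  then have "real k \<le> 1/2 * real n" "real n > 0" by linarith+
  then show "x \<le> 1/2" unfolding x(1) by (simp add: pos_divide_le_eq)
qed

lemma const_hom: assumes "w \<in> W" shows "cyclic_hom (Cverts 1) (Cedge 1 0) W E' (\<lambda>_. w)"
proof -
  have ne: "\<not> Cedge 1 0 x y" for x y unfolding Cedge_def by auto
  have e: "{(a, b). Cedge 1 0 a b} = {}" using ne by auto
  have "\<not> has_dcycle (Cverts 1) (Cedge 1 0)" unfolding has_dcycle_def e by simp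
  then show ?thesis unfolding cyclic_hom_def cw_le_def using assms ne by auto
qed

lemma wf_fin_ne: assumes "w \<in> W"
  shows "{real k / real n | n k. 2 * k < n \<and> (\<exists>f. cyclic_hom (Cverts n) (Cedge n k) W E' f)} \<noteq> {}"
proof -
  have "\<exists>n k. real 0 / real 1 = real k / real n \<and> 2 * k < n \<and> (\<exists>f. cyclic_hom (Cverts n) (Cedge n k) W E' f)"
    by (rule exI[of _ 1], rule exI[of _ 0]) (use const_hom[OF assms] in auto)
  then show ?thesis by blast
qed

lemma wf_fin_ge: assumes "2 * k < n" "cyclic_hom (Cverts n) (Cedge n k) W E' f"
  shows "real k / real n \<le> wf_fin W E'"
  unfolding wf_fin_def
proof (rule cSup_upper)
  show "real k / real n \<in> {real k / real n | n k. 2 * k < n \<and> (\<exists>f. cyclic_hom (Cverts n) (Cedge n k) W E' f)}"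
    using assms by blast
  show "bdd_above {real k / real n | n k. 2 * k < n \<and> (\<exists>f. cyclic_hom (Cverts n) (Cedge n k) W E' f)}"
    by (rule wf_fin_bdd)
qed

lemma wf_fin_le: assumes "w \<in> W" shows "wf_fin W E' \<le> 1/2"
  unfolding wf_fin_def
proof (rule cSup_least)
  show "{real k / real n | n k. 2 * k < n \<and> (\<exists>f. cyclic_hom (Cverts n) (Cedge n k) W E' f)} \<noteq> {}"
    by (rule wf_fin_ne[OF assms])
  fix x assume "x \<in> {real k / real n | n k. 2 * k < n \<and> (\<exists>f. cyclic_hom (Cverts n) (Cedge n k) W E' f)}"
  then obtain n k where x: "x = real k / real n" "2 * k < n" by auto
  then have "2 * real k < real n" by linarith
  then have "real k \<le> 1/2 * real n" "real n > 0" by linarith+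
  then show "x \<le> 1/2" unfolding x(1) by (simp add: pos_divide_le_eq)
qed

lemma wf_fin_nonneg: assumes "w \<in> W" shows "0 \<le> wf_fin W E'"
  using wf_fin_ge[of 0 1 W E' "\<lambda>_. w"] const_hom[OF assms] by simp

lemma wf_bdd: "bdd_above {wf_fin W (induced E W) | W. finite W \<and> W \<subseteq> V \<and> W \<noteq> {}}"
proof (rule bdd_aboveI[of _ "1/2"])
  fix x assume "x \<in> {wf_fin W (induced E W) | W. finite W \<and> W \<subseteq> V \<and> W \<noteq> {}}"
  then obtain W where "x = wf_fin W (induced E W)" "W \<noteq> {}" by auto
  then show "x \<le> 1/2" using wf_fin_le by auto
qed

lemma wf_ge: assumes "finite W" "W \<subseteq> V" "W \<noteq> {}" shows "wf_fin W (induced E W) \<le> wf V E"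
  unfolding wf_def
proof (rule cSup_upper)
  show "wf_fin W (induced E W) \<in> {wf_fin W (induced E W) | W. finite W \<and> W \<subseteq> V \<and> W \<noteq> {}}"
    using assms by blast
  show "bdd_above {wf_fin W (induced E W) | W. finite W \<and> W \<subseteq> V \<and> W \<noteq> {}}"
    by (rule wf_bdd)
qed

lemma wf_nonneg: assumes "v \<in> V" shows "0 \<le> wf V E"
  using wf_ge[of "{v}" V E] wf_fin_nonneg[of v "{v}" "induced E {v}"] assms by force

lemma sum_cdist_le: "(\<Sum>i<m. cdist (w i) (w (Suc i))) \<le> real m"
proof -
  have "(\<Sum>i<m. cdist (w i) (w (Suc i))) \<le> (\<Sum>i<m. 1)"
    by (intro sum_mono) (simp add: cdist_lt1 less_imp_le)
  then show ?thesis by simp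
qed

lemma gamma_bdd: "bdd_above {(\<Sum>i<m. cdist (w i) (w (Suc i))) | w.
      w 0 = v \<and> (\<forall>i<m. w (Suc i) \<in> V \<and> (w (Suc i) = w i \<or> E (w i) (w (Suc i))))}"
  by (rule bdd_aboveI[of _ "real m"]) (auto intro: sum_cdist_le)

lemma gamma_ge:
  assumes "w 0 = v" "\<forall>i<m. w (Suc i) \<in> V \<and> (w (Suc i) = w i \<or> E (w i) (w (Suc i)))"
  shows "(\<Sum>i<m. cdist (w i) (w (Suc i))) \<le> gamma V E m v"
  unfolding gamma_def
proof (rule cSup_upper)
  show "(\<Sum>i<m. cdist (w i) (w (Suc i))) \<in> {(\<Sum>i<m. cdist (w i) (w (Suc i))) | w.
      w 0 = v \<and> (\<forall>i<m. w (Suc i) \<in> V \<and> (w (Suc i) = w i \<or> E (w i) (w (Suc i))))}"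
    using assms by blast
  show "bdd_above {(\<Sum>i<m. cdist (w i) (w (Suc i))) | w.
      w 0 = v \<and> (\<forall>i<m. w (Suc i) \<in> V \<and> (w (Suc i) = w i \<or> E (w i) (w (Suc i))))}"
    by (rule gamma_bdd)
qed

theorem upper_bound:
  assumes cyc: "cyclic_graph V E" and vV: "v \<in> V"
  shows "gamma V E m v \<le> real m * wf V E + 3"
  unfolding gamma_def
proof (rule cSup_least)
  show "{(\<Sum>i<m. cdist (w i) (w (Suc i))) | w.
      w 0 = v \<and> (\<forall>i<m. w (Suc i) \<in> V \<and> (w (Suc i) = w i \<or> E (w i) (w (Suc i))))} \<noteq> {}"
  proof -
    have "(0::real) \<in> {(\<Sum>i<m. cdist (w i) (w (Suc i))) | w.
      w 0 = v \<and> (\<forall>i<m. w (Suc i) \<in> V \<and> (w (Suc i) = w i \<or> E (w i) (w (Suc i))))}"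
      by (intro CollectI exI[of _ "\<lambda>_. v"]) (use vV in simp)
    then show ?thesis by blast
  qed
next
  fix x assume "x \<in> {(\<Sum>i<m. cdist (w i) (w (Suc i))) | w.
      w 0 = v \<and> (\<forall>i<m. w (Suc i) \<in> V \<and> (w (Suc i) = w i \<or> E (w i) (w (Suc i))))}"
  then obtain w where x: "x = (\<Sum>i<m. cdist (w i) (w (Suc i)))" and w0: "w 0 = v"
    and st: "\<forall>i<m. w (Suc i) \<in> V \<and> (w (Suc i) = w i \<or> E (w i) (w (Suc i)))" by auto
  define W where "W = w ` {..m}"
  have WV: "W \<subseteq> V"
  proof
    fix y assume "y \<in> W"
    then obtain i where "i \<le> m" "y = w i" by (auto simp: W_def)
    then show "y \<in> V" using st w0 vV by (cases i) auto
  qed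
  have finW: "finite W" by (simp add: W_def)
  interpret fing V E W using cyc finW WV by unfold_locales
  have vW: "v \<in> W" using w0 by (force simp: W_def)
  have stW: "\<forall>i<m. w (Suc i) \<in> W \<and> (w (Suc i) = w i \<or> E (w i) (w (Suc i)))"
    using st by (auto simp: W_def)
  have xA: "x \<le> (T ^^ m) v - v" using walk_le_T[OF w0 vW stW] x by simp
  have fvW: "frac v \<in> W" using W01[OF vW] vW by simp
  have Am: "(T ^^ m) v - v \<le> real m" using Tn_le[OF fvW, of m] by linarith
  have wf0: "0 \<le> wf V E" by (rule wf_nonneg[OF vV])
  show "x \<le> real m * wf V E + 3"
  proof (cases "(T ^^ m) v - v < 3")
    case True then show ?thesis using xA wf0 by (simp add: add_increasing)
  next
    case False
    define A where "A = (T ^^ m) v - v"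
    define k where "k = nat \<lfloor>A\<rfloor> - 2"
    have kk: "real k + 2 \<le> A" "A < real k + 3" "1 \<le> k"
      using False unfolding k_def A_def by linarith+
    have m0: "0 < m" using Am False by (cases m) auto
    interpret Fcon V E W v m k
      using vW m0 kk(1) unfolding A_def by unfold_locales auto
    have km: "k < m" using kk Am unfolding A_def by linarith
    have m2k: "2 * k < m" using no_big_k[OF kk(3) km] by (meson not_le)
    have "real k / real m \<le> wf_fin W (induced E W)" using wf_fin_ge[OF m2k f_hom[OF kk(3)]] .
    also have "\<dots> \<le> wf V E" using wf_ge[OF finW WV] vW by auto
    finally have "real k \<le> real m * wf V E" using m0 by (simp add: field_simps)
    then show ?thesis using xA kk unfolding A_def by linarith
  qed
qed



lemma frac_step: "b \<in> {0..<1} \<Longrightarrow> frac (x + cdist (frac x) b) = b"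
proof -
  assume b: "b \<in> {0..<1}"
  have "frac (x + cdist (frac x) b) = frac (x + (b - frac x))"
    unfolding cdist_def by (simp only: frac_add_simps)
  also have "\<dots> = frac (b + of_int \<lfloor>x\<rfloor>)" by (simp add: frac_def algebra_simps)
  also have "\<dots> = b" using b by simp
  finally show ?thesis .
qed

lemma exists_cross: "P (0::nat) \<Longrightarrow> \<not> P k \<Longrightarrow> \<exists>t<k. P t \<and> \<not> P (Suc t)"
proof (induction k)
  case 0 then show ?case by simp
next
  case (Suc k)
  show ?case
  proof (cases "P k")
    case True then show ?thesis using Suc by blast
  next
    case False then show ?thesis using Suc less_SucI by blast
  qed
qed

lemma cdist_inj: "p \<in> {0..<1} \<Longrightarrow> q \<in> {0..<1} \<Longrightarrow> r \<in> {0..<1} \<Longrightarrow> cdist p q = cdist p r \<Longrightarrow> q = r"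
  by (auto simp: cdist_alt split: if_splits)

locale Lcon =
  fixes V :: "real set" and E :: "real \<Rightarrow> real \<Rightarrow> bool" and W :: "real set"
    and n k :: nat and f :: "real \<Rightarrow> real"
  assumes cyc: "cyclic_graph V E" and sub: "W \<subseteq> V"
    and hom: "cyclic_hom (Cverts n) (Cedge n k) W (induced E W) f"
    and nk: "2 * k < n" and k1: "1 \<le> k"
begin

lemma n0: "0 < n" using nk by simp
lemma kn: "k < n" using nk by simp

definition p :: "nat \<Rightarrow> real" where "p t = f (real (t mod n) / real n)"

lemma Cv: "real (t mod n) / real n \<in> Cverts n" using n0 by (auto simp: Cverts_def)

lemma pW: "p t \<in> W" using hom Cv unfolding cyclic_hom_def p_def by blast
lemma p01: "p t \<in> {0..<1}" using pW sub cg_facts(1)[OF cyc] by blast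
lemma pV: "p t \<in> V" using pW sub by blast

lemma p_per: "p (t + c * n) = p t" unfolding p_def by simp

definition G :: "nat \<Rightarrow> real" where "G t = p 0 + (\<Sum>u<t. cdist (p u) (p (Suc u)))"

lemma G_Suc: "G (Suc t) = G t + cdist (p t) (p (Suc t))" by (simp add: G_def)

lemma G_frac: "frac (G t) = p t"
proof (induction t)
  case 0 then show ?case using p01 by (simp add: G_def)
next
  case (Suc t)
  have "frac (G (Suc t)) = frac (G t + cdist (frac (G t)) (p (Suc t)))" using Suc by (simp add: G_Suc)
  also have "\<dots> = p (Suc t)" using p01 by (rule frac_step)
  finally show ?case .
qed

lemma G_mono: "t \<le> t' \<Longrightarrow> G t \<le> G t'"
proof (induction t' rule: dec_induct)
  case (step t')
  then show ?case using cdist_ge0[of "p t'" "p (Suc t')"] by (simp add: G_Suc)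
qed simp

lemma G_step_lt: "G (Suc t) < G t + 1" using cdist_lt1 by (simp add: G_Suc)

definition Sn where "Sn = G n - G 0"

lemma G_per: "G (t + n) = G t + Sn"
proof (induction t)
  case 0 then show ?case by (simp add: Sn_def)
next
  case (Suc t)
  have h1: "p (t + n) = p t" using p_per[of t 1] by simp
  have h2: "p (Suc (t + n)) = p (Suc t)" using p_per[of "Suc t" 1] by simp
  show ?case using Suc h1 h2 by (simp add: G_Suc)
qed

lemma G_per_mult: "G (t + c * n) = G t + real c * Sn"
proof (induction c)
  case (Suc c)
  have "G (t + Suc c * n) = G ((t + c * n) + n)" by (simp add: algebra_simps)
  also have "\<dots> = G (t + c * n) + Sn" by (rule G_per)
  finally show ?case using Suc by (simp add: algebra_simps)
qed simp

lemma Sn_int: "Sn \<in> \<int>"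
proof -
  have "frac (G n) = frac (G 0)" using G_frac p_per[of 0 1] by simp
  then obtain j where "G n = G 0 + of_int j" by (rule frac_eqE)
  then show ?thesis unfolding Sn_def by simp
qed

lemma dcycle: "has_dcycle (Cverts n) (Cedge n k)"
proof -
  let ?R = "{(a, b). Cedge n k a b}"
  have e: "Cedge n k (real j / real n) (real ((j + 1) mod n) / real n)" if "j < n" for j
    unfolding Cedge_def using that k1 by blast
  have "1 \<le> j \<longrightarrow> j < n \<longrightarrow> (real 0 / real n, real j / real n) \<in> ?R\<^sup>+" for j
  proof (induction j)
    case (Suc j)
    show ?case
    proof (intro impI)
      assume a: "1 \<le> Suc j" "Suc j < n"
      have ej: "(real j / real n, real (Suc j) / real n) \<in> ?R" using e[of j] a by simp
      show "(real 0 / real n, real (Suc j) / real n) \<in> ?R\<^sup>+"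
      proof (cases "j = 0")
        case True then show ?thesis using ej by auto
      next
        case False
        then have "(real 0 / real n, real j / real n) \<in> ?R\<^sup>+" using Suc a by simp
        then show ?thesis using ej by (rule trancl_into_trancl)
      qed
    qed
  qed simp
  from this[of "n - 1"] have a: "(real 0 / real n, real (n - 1) / real n) \<in> ?R\<^sup>+" using nk k1 by simp
  have "(real (n - 1) / real n, real 0 / real n) \<in> ?R" using e[of "n - 1"] n0 by simp
  with a have "(real 0 / real n, real 0 / real n) \<in> ?R\<^sup>+" by (rule trancl_into_trancl)
  moreover have "real 0 / real n \<in> Cverts n" using n0 unfolding Cverts_def by blast
  ultimately show ?thesis unfolding has_dcycle_def by blast
qed

lemma Sn_ge1: "Sn \<ge> 1"
proof -
  have "\<exists>x\<in>Cverts n. \<exists>y\<in>Cverts n. f x \<noteq> f y"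
    using hom[unfolded cyclic_hom_def, THEN conjunct2, THEN conjunct2, THEN conjunct2] dcycle by (rule mp)
  then obtain x y where xy: "x \<in> Cverts n" "y \<in> Cverts n" "f x \<noteq> f y" by blast
  from xy(1) obtain i where i: "i < n" "x = real i / real n" unfolding Cverts_def by blast
  from xy(2) obtain j where j: "j < n" "y = real j / real n" unfolding Cverts_def by blast
  note ij = i(1) j(1) i(2) j(2)
  have "p i \<noteq> p j" using ij xy unfolding p_def by simp
  have "\<exists>u<n. p u \<noteq> p (Suc u)"
  proof (rule ccontr)
    assume "\<not> ?thesis"
    then have all: "\<And>u. u < n \<Longrightarrow> p (Suc u) = p u" by auto
    have pt: "t \<le> n \<longrightarrow> p t = p 0" for t
    proof (induction t)
      case (Suc t) then show ?case using all[of t] by simp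
    qed simp
    have "p i = p 0" "p j = p 0" using pt[of i] pt[of j] ij(1,2) by auto
    then show False using \<open>p i \<noteq> p j\<close> by simp
  qed
  then obtain u where u: "u < n" "p u \<noteq> p (Suc u)" by blast
  have pos: "cdist (p u) (p (Suc u)) > 0"
    using u cdist_eq0[OF p01 p01, of u "Suc u"] cdist_ge0[of "p u" "p (Suc u)"] by linarith
  have "cdist (p u) (p (Suc u)) \<le> (\<Sum>v<n. cdist (p v) (p (Suc v)))"
    using u by (intro member_le_sum) (auto simp: cdist_ge0)
  then have "Sn > 0" using pos unfolding Sn_def G_def by simp
  obtain j where j: "Sn = of_int j" using Sn_int by (auto elim: Ints_cases)
  with \<open>Sn > 0\<close> have "j \<ge> 1" by simp
  then show ?thesis using j by simp
qed

lemma edge: assumes "1 \<le> t" "t \<le> k" shows "E (p a) (p (a + t)) \<or> p a = p (a + t)"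
proof -
  have "Cedge n k (real (a mod n) / real n) (real ((a + t) mod n) / real n)"
    unfolding Cedge_def using assms n0 by (intro exI[of _ "a mod n"] exI[of _ t]) (auto simp: mod_add_left_eq)
  then show ?thesis using hom unfolding cyclic_hom_def p_def induced_def by blast
qed

lemma grid_mod: assumes "t < n"
  shows "cdist (real (a mod n) / real n) (real ((a + t) mod n) / real n) = real t / real n"
proof -
  have "(int ((a + t) mod n) - int (a mod n)) mod int n = int t"
  proof -
    have "(int ((a + t) mod n) - int (a mod n)) mod int n = ((int a + int t) mod int n - int a mod int n) mod int n"
      by (simp add: zmod_int)
    also have "\<dots> = int t mod int n" by (simp add: mod_diff_eq)
    also have "\<dots> = int t" using assms by simp
    finally show ?thesis .
  qed
  then show ?thesis using cdist_grid[OF n0, of "a mod n" "(a + t) mod n"] n0 by simp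
qed

lemma cw_triple: assumes "Suc t < n"
  shows "cw_le (p a) (p (a + t)) (p (a + Suc t))"
proof -
  have in01: "real (b mod n) / real n \<in> {0..<1}" for b using n0 by (simp add: field_simps)
  have "cw_le (real (a mod n) / real n) (real ((a + t) mod n) / real n) (real ((a + Suc t) mod n) / real n)"
    using grid_mod[of t a] grid_mod[of "Suc t" a] assms n0
    by (subst cw_le_iff[OF in01 in01 in01]) (simp add: divide_right_mono)
  then show ?thesis using hom Cv unfolding cyclic_hom_def p_def by blast
qed

lemma window: "G (a + k) - G a < 1"
proof (rule ccontr)
  assume "\<not> ?thesis"
  then obtain t where t: "t < k" "G (a + t) - G a < 1" "\<not> G (a + Suc t) - G a < 1"
    using exists_cross[of "\<lambda>t. G (a + t) - G a < 1" k] by auto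
  have t1: "1 \<le> t"
  proof (rule ccontr)
    assume "\<not> 1 \<le> t" then have "t = 0" by simp
    then show False using t G_step_lt[of a] by simp
  qed
  have mono1: "G a \<le> G (a + t)" by (rule G_mono) simp
  have stp: "G (a + Suc t) < G (a + t) + 1" using G_step_lt[of "a + t"] by simp
  have cPY: "cdist (p a) (p (a + t)) = G (a + t) - G a"
    using lift_dist[of "G a" "G (a + t)"] mono1 t G_frac by simp
  have cPZ: "cdist (p a) (p (a + Suc t)) = G (a + Suc t) - G a - 1"
    using lift_dist[of "G a + 1" "G (a + Suc t)"] t stp G_frac by (simp add: frac_1_eq)
  have "p a = p (a + Suc t) \<or> cdist (p a) (p (a + t)) \<le> cdist (p a) (p (a + Suc t))"
    using cw_triple[of t a] t kn cw_le_iff[OF p01 p01 p01] by simp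
  then show False
  proof
    assume eq: "p a = p (a + Suc t)"
    then have "G (a + Suc t) = G a + 1" using cPZ t stp by simp
    then have gt: "G a < G (a + t)" using stp mono1 by linarith
    then have ne: "p a \<noteq> p (a + t)" using cPY by auto
    have e1: "E (p a) (p (a + t))" using edge[OF t1, of a] t ne by auto
    have "E (p (a + t)) (p (a + t + 1)) \<or> p (a + t) = p (a + t + 1)" using edge[of 1 "a + t"] k1 by simp
    then have e2: "E (p (a + t)) (p a)" using eq ne by simp
    show False using e1 e2 cg_facts(4)[OF cyc] by blast
  next
    assume "cdist (p a) (p (a + t)) \<le> cdist (p a) (p (a + Suc t))"
    then show False using cPY cPZ stp by linarith
  qed
qed

definition q :: "nat \<Rightarrow> real" where "q j = p (j * k)"

lemma q_step: "E (q j) (q (Suc j)) \<or> q j = q (Suc j)"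
  using edge[OF k1, of "j * k"] unfolding q_def by (simp add: algebra_simps)

lemma q_cdist: "cdist (q j) (q (Suc j)) = G (Suc j * k) - G (j * k)"
proof -
  have "G (j * k) \<le> G (j * k + k)" by (rule G_mono) simp
  then show ?thesis using lift_dist[of "G (j * k)" "G (j * k + k)"] window[of "j * k"] G_frac
    unfolding q_def by (simp add: algebra_simps)
qed

lemma q_per: "q (j + n) = q j"
  unfolding q_def using p_per[of "j * k" k] by (simp add: algebra_simps)

lemma q_sum: "(\<Sum>t<L. cdist (q (u + t)) (q (Suc (u + t)))) = G ((u + L) * k) - G (u * k)"
  by (induction L) (simp_all add: q_cdist algebra_simps)

lemma G_lower: "G ((u + L) * k) - G (u * k) \<ge> real (L div n) * real k"
proof -
  have "u * k + (L div n * k) * n \<le> (u + L) * k"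
  proof -
    have "(L div n) * n \<le> L" by simp
    then have "(L div n * n) * k \<le> L * k" by (rule mult_right_mono) simp
    then show ?thesis by (simp add: algebra_simps)
  qed
  then have "G (u * k + (L div n * k) * n) \<le> G ((u + L) * k)" by (rule G_mono)
  moreover have "G (u * k + (L div n * k) * n) = G (u * k) + real (L div n * k) * Sn" by (rule G_per_mult)
  moreover have "real (L div n * k) * 1 \<le> real (L div n * k) * Sn" by (rule mult_left_mono[OF Sn_ge1]) simp
  ultimately show ?thesis by simp
qed

lemma qV: "q j \<in> V" unfolding q_def by (rule pV)
lemma q01: "q j \<in> {0..<1}" unfolding q_def by (rule p01)

lemma reach: assumes vV: "v \<in> V" shows "\<exists>j. v = q j \<or> E v (q (Suc j))"
proof (rule ccontr)
  assume "\<not> ?thesis"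
  then have nv: "\<And>j. v \<noteq> q j" and ne: "\<And>j. \<not> E v (q (Suc j))" by auto
  have v01: "v \<in> {0..<1}" using vV cg_facts(1)[OF cyc] by blast
  have stp: "cdist v (q (Suc j)) = cdist v (q j) + cdist (q j) (q (Suc j))" for j
  proof (cases "q j = q (Suc j)")
    case True then show ?thesis by simp
  next
    case False
    then have e: "E (q j) (q (Suc j))" using q_step by blast
    have "\<not> cdist (q j) v \<le> cdist (q j) (q (Suc j))"
    proof
      assume le: "cdist (q j) v \<le> cdist (q j) (q (Suc j))"
      have "cw_lt (q j) v (q (Suc j))"
        unfolding cw_lt_def using le nv[of j] nv[of "Suc j"] False cw_le_iff[OF q01 v01 q01] by auto
      then have "E v (q (Suc j))" using cg_facts(5)[OF cyc qV qV vV e] by blast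
      then show False using ne by blast
    qed
    then have "cdist (q j) (q (Suc j)) < cdist (q j) v" by simp
    then show ?thesis using nv[of j] by (intro cdist_via[OF q01 q01 v01]) auto
  qed
  have "cdist v (q j) = cdist v (q 0) + (\<Sum>t<j. cdist (q t) (q (Suc t)))" for j
    by (induction j) (simp_all add: stp)
  from this[of n] have "(\<Sum>t<n. cdist (q t) (q (Suc t))) = 0" using q_per[of 0] by simp
  moreover have "(\<Sum>t<n. cdist (q t) (q (Suc t))) \<ge> real k"
  proof -
    have "G ((0 + n) * k) - G (0 * k) \<ge> real (n div n) * real k" by (rule G_lower)
    moreover have "n div n = 1" using n0 by simp
    moreover have "(\<Sum>t<n. cdist (q t) (q (Suc t))) = G ((0 + n) * k) - G (0 * k)" using q_sum[where L=n and u=0] by simp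
    ultimately show ?thesis by simp
  qed
  ultimately show False using n0 k1 by simp
qed

lemma gamma_lower: assumes vV: "v \<in> V"
  shows "gamma V E m v \<ge> real ((m - 1) div n) * real k"
proof -
  obtain j where j: "v = q j \<or> E v (q (Suc j))" using reach[OF vV] by blast
  define w where "w i = (if i = 0 then v else q (j + i))" for i
  have w0: "w 0 = v" by (simp add: w_def)
  have st: "\<forall>i<m. w (Suc i) \<in> V \<and> (w (Suc i) = w i \<or> E (w i) (w (Suc i)))"
  proof (intro allI impI conjI)
    fix i assume "i < m"
    show "w (Suc i) \<in> V" by (simp add: w_def qV)
    show "w (Suc i) = w i \<or> E (w i) (w (Suc i))"
    proof (cases i)
      case 0 then show ?thesis using j q_step[of j] by (auto simp: w_def)
    next
      case (Suc i') then show ?thesis using q_step[of "j + i"] by (auto simp: w_def)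
    qed
  qed
  have "gamma V E m v \<ge> (\<Sum>i<m. cdist (w i) (w (Suc i)))" by (rule gamma_ge[OF w0 st])
  moreover have "(\<Sum>i<m. cdist (w i) (w (Suc i))) \<ge> real ((m - 1) div n) * real k"
  proof (cases m)
    case 0 then show ?thesis by simp
  next
    case (Suc m')
    have "(\<Sum>i<m. cdist (w i) (w (Suc i))) = (\<Sum>i<m'. cdist (w (Suc i)) (w (Suc (Suc i)))) + cdist (w 0) (w 1)"
      unfolding Suc sum.lessThan_Suc_shift by simp
    also have "(\<Sum>i<m'. cdist (w (Suc i)) (w (Suc (Suc i)))) = (\<Sum>t<m'. cdist (q (Suc j + t)) (q (Suc (Suc j + t))))"
      by (simp add: w_def)
    also have "\<dots> = G ((Suc j + m') * k) - G (Suc j * k)" by (rule q_sum)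
    finally have "(\<Sum>i<m. cdist (w i) (w (Suc i))) \<ge> G ((Suc j + m') * k) - G (Suc j * k)"
      using cdist_ge0 by simp
    moreover have "G ((Suc j + m') * k) - G (Suc j * k) \<ge> real (m' div n) * real k" by (rule G_lower)
    ultimately show ?thesis using Suc by simp
  qed
  ultimately show ?thesis by linarith
qed

end


lemma gamma_nonneg: assumes "v \<in> V" shows "0 \<le> gamma V E m v"
  using gamma_ge[of "\<lambda>_. v" v m V E] assms by simp

lemma div_lower: assumes "0 < n" "1 \<le> m"
  shows "real ((m - 1) div n) \<ge> (real m - 1) / real n - 1"
proof -
  define q where "q = (m - 1) div n"
  define s where "s = (m - 1) mod n"
  have "m - 1 = n * q + s" unfolding q_def s_def by simp
  then have "real (m - 1) = real (n * q + s)" by (rule arg_cong)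
  then have e: "real (m - 1) = real n * real q + real s"
    unfolding of_nat_add of_nat_mult .
  have s: "real s < real n" unfolding s_def using assms by simp
  have m: "real (m - 1) = real m - 1" using assms by (simp add: of_nat_diff)
  have d: "real n * (real q + 1) = real n * real q + real n" by (simp add: distrib_left)
  have "real m - 1 < (real q + 1) * real n" using e s m d by (simp only: mult.commute[of "real q + 1"])
  moreover have "real n > 0" using assms by simp
  ultimately have "(real m - 1) / real n < real q + 1" by (simp add: pos_divide_less_eq)
  then show ?thesis unfolding q_def by linarith
qed

lemma lower_bound:
  assumes cyc: "cyclic_graph V E" and vV: "v \<in> V" and r: "0 < r"
  shows "\<exists>N. \<forall>m\<ge>N. gamma V E m v / real m > wf V E - r"
proof -
  let ?A = "{wf_fin W (induced E W) | W. finite W \<and> W \<subseteq> V \<and> W \<noteq> {}}"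
  have neA: "?A \<noteq> {}" using vV by blast
  have ltA: "wf V E - r/2 < Sup ?A" using r unfolding wf_def by simp
  have A: "(wf V E - r/2 < Sup ?A) = (\<exists>x\<in>?A. wf V E - r/2 < x)"
    by (rule less_cSup_iff[OF neA wf_bdd])
  from A[THEN iffD1, OF ltA] obtain x where "x \<in> ?A" "wf V E - r/2 < x"
    by (rule bexE)
  then obtain W where W: "finite W" "W \<subseteq> V" "W \<noteq> {}" "wf V E - r/2 < wf_fin W (induced E W)" by blast
  let ?B = "{real k / real n | n k. 2 * k < n \<and> (\<exists>f. cyclic_hom (Cverts n) (Cedge n k) W (induced E W) f)}"
  obtain w where w: "w \<in> W" using W by blast
  have lt: "wf_fin W (induced E W) - r/2 < Sup ?B" using r unfolding wf_fin_def by simp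
  have B: "(wf_fin W (induced E W) - r/2 < Sup ?B) = (\<exists>y\<in>?B. wf_fin W (induced E W) - r/2 < y)"
    by (rule less_cSup_iff[OF wf_fin_ne[OF w] wf_fin_bdd])
  from B[THEN iffD1, OF lt] obtain y where "y \<in> ?B" "wf_fin W (induced E W) - r/2 < y"
    by (rule bexE)
  then obtain n k f where nkf: "y = real k / real n" "2 * k < n" "cyclic_hom (Cverts n) (Cedge n k) W (induced E W) f"
    by blast
  have knr: "real k / real n > wf V E - r" using nkf W \<open>wf_fin W (induced E W) - r/2 < y\<close> by linarith
  show ?thesis
  proof (cases "k = 0")
    case True
    then have "wf V E - r < 0" using knr by simp
    show ?thesis
    proof (intro exI[of _ 0] allI impI)
      fix m :: nat
      have "0 \<le> gamma V E m v / real m" using gamma_nonneg[OF vV, of E m] by simp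
      then show "gamma V E m v / real m > wf V E - r" using \<open>wf V E - r < 0\<close> by linarith
    qed
  next
    case False
    then have k1: "1 \<le> k" by simp
    interpret Lcon V E W n k f using cyc W(2) nkf k1 by unfold_locales auto
    define \<delta> where "\<delta> = real k / real n - (wf V E - r)"
    have d0: "\<delta> > 0" using knr by (simp add: \<delta>_def)
    define N where "N = nat \<lceil>(real n + 1) / \<delta>\<rceil> + 1"
    have n0': "real n > 0" using n0 by simp
    have "real k \<le> real n" using nkf(2) by simp
    then have kn1: "real k / real n \<le> 1" using n0' by (simp add: divide_le_eq_1_pos)
    show ?thesis
    proof (intro exI allI impI)
      fix m assume mN: "N \<le> m"
      then have m1: "1 \<le> m" unfolding N_def by simp
      have mpos: "real m > 0" using m1 by simp
      have "real m > (real n + 1) / \<delta>" using mN unfolding N_def by linarith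
      then have bnd: "(real n + 1) / real m < \<delta>" using d0 mpos by (simp add: field_simps)
      have g: "gamma V E m v \<ge> real ((m - 1) div n) * real k" by (rule gamma_lower[OF vV])
      have "real ((m - 1) div n) * real k \<ge> ((real m - 1) / real n - 1) * real k"
        using div_lower[OF n0 m1] by (rule mult_right_mono) simp
      then have g2: "gamma V E m v \<ge> ((real m - 1) / real n - 1) * real k" using g by linarith
      have eq: "((real m - 1) / real n - 1) * real k / real m
          = real k / real n - (real k / real n) * ((real n + 1) / real m)"
        using n0' mpos by (simp add: field_simps)
      have "(real k / real n) * ((real n + 1) / real m) \<le> (real n + 1) / real m"
        using kn1 mpos by (intro mult_left_le_one_le) auto
      then have "((real m - 1) / real n - 1) * real k / real m > wf V E - r"
        unfolding eq using bnd \<delta>_def by linarith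
      moreover have "gamma V E m v / real m \<ge> ((real m - 1) / real n - 1) * real k / real m"
        using g2 mpos by (simp add: divide_right_mono)
      ultimately show "gamma V E m v / real m > wf V E - r" by linarith
    qed
  qed
qed

theorem mainTheorem8:
  fixes V :: "real set" and E :: "real \<Rightarrow> real \<Rightarrow> bool" and v :: real
  assumes "cyclic_graph V E" and "v \<in> V"
  shows "(\<lambda>m. gamma V E m v / real m) \<longlonglongrightarrow> wf V E"
proof (rule metric_LIMSEQ_I)
  fix r :: real assume r: "0 < r"
  obtain N1 where N1: "\<forall>m\<ge>N1. gamma V E m v / real m > wf V E - r"
    using lower_bound[OF assms r] by blast
  define N2 where "N2 = nat \<lceil>3 / r\<rceil> + 1"
  show "\<exists>no. \<forall>m\<ge>no. dist (gamma V E m v / real m) (wf V E) < r"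
  proof (intro exI allI impI)
    fix m assume m: "max N1 N2 \<le> m"
    have lo: "gamma V E m v / real m > wf V E - r" using N1 m by simp
    have mpos: "real m > 0" using m unfolding N2_def by simp
    have "real m > 3 / r" using m unfolding N2_def by linarith
    then have "3 / real m < r" using r mpos by (simp add: field_simps)
    moreover have "gamma V E m v / real m \<le> wf V E + 3 / real m"
      using upper_bound[OF assms, of m] mpos by (simp add: field_simps)
    ultimately have "gamma V E m v / real m < wf V E + r" by linarith
    then show "dist (gamma V E m v / real m) (wf V E) < r" using lo by (simp add: dist_real_def abs_less_iff)
  qed
qed



end
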